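(* Let $m,n\ge1$ and let $\lambda\subseteq\nu\subseteq(n-1)^{m-1}$ be partitions. Then $\mathrm{PASM}(\nu/\lambda,m,n)$ is a face of $\mathrm{PASM}(m,n)$, of dimension $|\nu|-|\lambda|$.
   Context: A partition $\mu=(\mu_1\ge\mu_2\ge\cdots)$ is a weakly decreasing sequence of nonnegative integers with finitely many nonzero terms, $|\mu|=\sum_i\mu_i$, and $\ell(\mu)$ is its number of positive parts. We write $\mu\subseteq\nu$ if $\mu_i\le\nu_i$ for all $i$, and $\mu\subseteq a^b$ if $\ell(\mu)\le b$ and $\mu_1\le a$. An $m\times n$ partial alternating sign matrix is an $m\times n$ matrix $M$ with entries in $\{-1,0,1\}$ such that $\sum_{i'=1}^{i}M_{i'j}\in\{0,1\}$ and $\sum_{j'=1}^{j}M_{ij'}\in\{0,1\}$ for all $i,j$; $\mathrm{PASM}(m,n)$ is the convex hull in $\mathbb{R}^{mn}$ of all $m\times n$ partial alternating sign matrices. For $\mu\subseteq(n-1)^{m-1}$, the $m\times n$ matrix $M^\mu$ has entries $M^\mu_{1,\mu_1+1}=1$; for each $1\le k\le m-1$ with $\mu_k>\mu_{k+1}$, $M^\mu_{k+1,\mu_{k+1}+1}=1$ and $M^\mu_{k+1,\mu_k+1}=-1$; all other entries $0$. $\mathrm{PASM}(\nu/\lambda,m,n)$ is the convex hull in $\mathbb{R}^{mn}$ of $\{M^\mu:\lambda\subseteq\mu\subseteq\nu\}$. *)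

theory Defs
  imports "HOL-Analysis.Analysis"
begin

text \<open>Partitions are encoded 0-indexed: the function mu :: nat => nat has
  mu 0 = mu_1, mu 1 = mu_2, ...\<close>

definition is_partition :: "(nat \<Rightarrow> nat) \<Rightarrow> bool" where
  "is_partition mu \<longleftrightarrow> (\<forall>i j. i \<le> j \<longrightarrow> mu j \<le> mu i) \<and> finite {i. mu i \<noteq> 0}"

definition psize :: "(nat \<Rightarrow> nat) \<Rightarrow> nat" where
  "psize mu = (\<Sum>i\<in>{i. mu i \<noteq> 0}. mu i)"

definition psubseteq :: "(nat \<Rightarrow> nat) \<Rightarrow> (nat \<Rightarrow> nat) \<Rightarrow> bool" where
  "psubseteq mu nu \<longleftrightarrow> (\<forall>i. mu i \<le> nu i)"

text \<open>mu contained in the rectangle a^b: at most b positive parts and mu_1 <= a.\<close>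
definition in_rect :: "(nat \<Rightarrow> nat) \<Rightarrow> nat \<Rightarrow> nat \<Rightarrow> bool" where
  "in_rect mu a b \<longleftrightarrow> card {i. 0 < mu i} \<le> b \<and> mu 0 \<le> a"

definition rk :: "'a::{finite,linorder} \<Rightarrow> nat" where
  "rk x = card {y. y < x}"

definition is_pasm :: "real^'n::{finite,linorder}^'m::{finite,linorder} \<Rightarrow> bool" where
  "is_pasm M \<longleftrightarrow>
     (\<forall>i j. M$i$j \<in> {-1,0,1}) \<and>
     (\<forall>i j. (\<Sum>i'\<in>{..i}. M$i'$j) \<in> {0,1}) \<and>
     (\<forall>i j. (\<Sum>j'\<in>{..j}. M$i$j') \<in> {0,1})"

definition PASM :: "(real^'n::{finite,linorder}^'m::{finite,linorder}) set" where
  "PASM = convex hull {M. is_pasm M}"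

text \<open>Entries of M^mu with 0-based row r and column c:
  row 0 has a 1 in column mu_1; row r >= 1 (i.e. row k+1 with k = r) has, if
  mu_k > mu_(k+1), a 1 in column mu_(k+1) and a -1 in column mu_k.\<close>
definition Mmu_entry :: "(nat \<Rightarrow> nat) \<Rightarrow> nat \<Rightarrow> nat \<Rightarrow> real" where
  "Mmu_entry mu r c =
     (if r = 0 then (if c = mu 0 then 1 else 0)
      else if mu r < mu (r - 1) then
        (if c = mu r then 1 else if c = mu (r - 1) then -1 else 0)
      else 0)"

definition Mmu :: "(nat \<Rightarrow> nat) \<Rightarrow> real^'n::{finite,linorder}^'m::{finite,linorder}" where
  "Mmu mu = (\<chi> i j. Mmu_entry mu (rk i) (rk j))"

definition PASM_skew :: "(nat \<Rightarrow> nat) \<Rightarrow> (nat \<Rightarrow> nat) \<Rightarrow> (real^'n::{finite,linorder}^'m::{finite,linorder}) set" where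
  "PASM_skew lam nu = convex hull {Mmu mu | mu. is_partition mu \<and> psubseteq lam mu \<and> psubseteq mu nu}"

end

theory Submission
  imports Defs
begin


lemma rk_strict: "(x::'a::{finite,linorder}) < y \<Longrightarrow> rk x < rk y"
  unfolding rk_def by (rule psubset_card_mono) auto

lemma rk_less_iff: "rk (x::'a::{finite,linorder}) < rk y \<longleftrightarrow> x < y"
  by (metis rk_strict less_asym' linorder_neqE)

lemma rk_le_iff: "rk (x::'a::{finite,linorder}) \<le> rk y \<longleftrightarrow> x \<le> y"
  by (meson rk_less_iff not_le)

lemma rk_inj: "inj (rk :: 'a::{finite,linorder} \<Rightarrow> nat)"
  by (rule injI) (metis rk_le_iff order_antisym order_refl)

lemma rk_eq_iff: "rk (x::'a::{finite,linorder}) = rk y \<longleftrightarrow> x = y"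
  using rk_inj by (auto dest: injD)

lemma rk_lt_card: "rk (x::'a::{finite,linorder}) < CARD('a)"
  unfolding rk_def by (rule psubset_card_mono) auto

lemma rk_image: "rk ` (UNIV::'a::{finite,linorder} set) = {..<CARD('a)}"
proof -
  have "rk ` (UNIV::'a set) \<subseteq> {..<CARD('a)}" using rk_lt_card by auto
  moreover have "card (rk ` (UNIV::'a set)) = card {..<CARD('a)}"
    using card_image[OF rk_inj] by simp
  ultimately show ?thesis by (intro card_subset_eq) auto
qed

lemma rk_surj: "r < CARD('a::{finite,linorder}) \<Longrightarrow> \<exists>x::'a. rk x = r"
  using rk_image by (metis imageE lessThan_iff)

lemma rk_bij: "bij_betw (rk::'a::{finite,linorder} \<Rightarrow> nat) UNIV {..<CARD('a)}"
  using rk_inj rk_image by (simp add: bij_betw_def)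

lemma rk_bij_atMost: "bij_betw (rk::'a::{finite,linorder} \<Rightarrow> nat) {..x} {..rk x}"
proof -
  have "rk ` {..x} = {..rk x}"
  proof
    show "rk ` {..x} \<subseteq> {..rk x}" by (auto simp: rk_le_iff)
    show "{..rk x} \<subseteq> rk ` {..x}"
    proof
      fix r assume "r \<in> {..rk x}"
      then have "r < CARD('a)" using rk_lt_card[of x] by auto
      then obtain y::'a where "rk y = r" using rk_surj by blast
      then show "r \<in> rk ` {..x}" using \<open>r \<in> {..rk x}\<close> by (auto simp: rk_le_iff)
    qed
  qed
  then show ?thesis using inj_on_subset[OF rk_inj] by (simp add: bij_betw_def)
qed

lemma sum_rk_UNIV: "(\<Sum>x\<in>(UNIV::'a::{finite,linorder} set). g (rk x)) = (\<Sum>r<CARD('a). g r)"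
  using sum.reindex_bij_betw[OF rk_bij, of g] by simp

lemma sum_rk_atMost: "(\<Sum>y\<in>{..x::'a::{finite,linorder}}. g (rk y)) = (\<Sum>r\<le>rk x. g r)"
  using sum.reindex_bij_betw[OF rk_bij_atMost, of g] by simp

lemma all_rk: "(\<forall>x::'a::{finite,linorder}. P (rk x)) \<longleftrightarrow> (\<forall>r<CARD('a). P r)"
  using rk_lt_card rk_surj by metis

definition ix :: "nat \<Rightarrow> 'a::{finite,linorder}" where "ix = inv rk"

lemma ix_rk[simp]: "ix (rk x) = x"
  unfolding ix_def by (simp add: rk_inj)

lemma rk_ix[simp]: "r < CARD('a::{finite,linorder}) \<Longrightarrow> rk (ix r :: 'a) = r"
  by (metis ix_rk rk_surj)




definition pasmN :: "nat \<Rightarrow> nat \<Rightarrow> (nat \<Rightarrow> nat \<Rightarrow> real) \<Rightarrow> bool" where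
  "pasmN m n A \<longleftrightarrow> (\<forall>r<m. \<forall>c<n. A r c \<in> {-1,0,1} \<and> (\<Sum>r'\<le>r. A r' c) \<in> {0,1} \<and> (\<Sum>c'\<le>c. A r c') \<in> {0,1})"

definition badN :: "(nat \<Rightarrow> nat) \<Rightarrow> (nat \<Rightarrow> nat) \<Rightarrow> nat \<Rightarrow> nat \<Rightarrow> bool" where
  "badN lam nu r c \<longleftrightarrow> c < lam r \<or> nu r < c"

definition fN :: "nat \<Rightarrow> nat \<Rightarrow> (nat \<Rightarrow> nat) \<Rightarrow> (nat \<Rightarrow> nat) \<Rightarrow> (nat \<Rightarrow> nat \<Rightarrow> real) \<Rightarrow> real" where
  "fN m n lam nu A = (\<Sum>c<n. A 0 c) - (\<Sum>r\<in>{1..<m}. \<Sum>c<n. A r c)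
     - (\<Sum>r<m. \<Sum>c<n. if badN lam nu r c then (\<Sum>r'\<le>r. A r' c) else 0)"

lemma part_mono: "is_partition mu \<Longrightarrow> i \<le> j \<Longrightarrow> mu j \<le> mu i"
  unfolding is_partition_def by blast

lemma rect_zero:
  assumes "is_partition nu" "card {i. 0 < nu i} \<le> m - 1" "m - 1 \<le> r"
  shows "nu r = 0"
proof (rule ccontr)
  assume "nu r \<noteq> 0"
  then have "{..r} \<subseteq> {i. 0 < nu i}" using part_mono[OF assms(1)] 
    by (auto intro: gr0I) (metis le_zero_eq not_gr_zero)
  moreover have "finite {i. 0 < nu i}" using assms(1) unfolding is_partition_def by simp
  ultimately have "card {..r} \<le> card {i. 0 < nu i}" by (rule card_mono[rotated])
  then show False using assms by simp
qed

lemma E_alt: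
  assumes "is_partition mu"
  shows "Mmu_entry mu r c = (if c = mu r then 1 else 0) - (if r = 0 then 0 else if c = mu (r - 1) then 1 else 0)"
proof -
  have "r > 0 \<Longrightarrow> mu r \<le> mu (r - 1)" using part_mono[OF assms, of "r - 1" r] by simp
  then show ?thesis unfolding Mmu_entry_def by (cases "r = 0") auto
qed

lemma sum_ind_le: "(\<Sum>c'\<le>(c::nat). (if c' = a then 1 else 0 :: real)) = (if a \<le> c then 1 else 0)"
  by (subst sum.delta) auto

lemma sum_ind_lt: "(\<Sum>c'<(c::nat). (if c' = a then 1 else 0 :: real)) = (if a < c then 1 else 0)"
  by (subst sum.delta) auto

lemma E_rowsum:
  assumes "is_partition mu"
  shows "(\<Sum>c'\<le>c. Mmu_entry mu r c') = (if mu r \<le> c then 1 else 0) - (if r = 0 then 0 else if mu (r - 1) \<le> c then 1 else 0)"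
  unfolding E_alt[OF assms] sum_subtractf by (simp add: sum_ind_le)

lemma E_rowtot:
  assumes "is_partition mu"
  shows "(\<Sum>c'<n. Mmu_entry mu r c') = (if mu r < n then 1 else 0) - (if r = 0 then 0 else if mu (r - 1) < n then 1 else 0)"
  unfolding E_alt[OF assms] sum_subtractf by (simp add: sum_ind_lt)

lemma E_colsum:
  assumes "is_partition mu"
  shows "(\<Sum>r'\<le>r. Mmu_entry mu r' c) = (if c = mu r then 1 else 0)"
proof (induction r)
  case 0 then show ?case by (simp add: E_alt[OF assms])
next
  case (Suc r) then show ?case by (simp add: E_alt[OF assms])
qed

lemma N3:
  assumes mu: "is_partition mu" and nu: "is_partition nu" and "psubseteq lam mu" "psubseteq mu nu"
    and rect: "in_rect nu (n - 1) (m - 1)" and m: "0 < m" and n: "0 < n"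
  shows "pasmN m n (Mmu_entry mu) \<and> fN m n lam nu (Mmu_entry mu) = 1"
proof -
  have lm: "lam r \<le> mu r" "mu r \<le> nu r" for r using assms(3,4) unfolding psubseteq_def by auto
  have mun: "mu r < n" for r
    using lm(2)[of r] part_mono[OF nu, of 0 r] rect n unfolding in_rect_def by linarith
  have dec: "r > 0 \<Longrightarrow> mu r \<le> mu (r - 1)" for r using part_mono[OF mu, of "r - 1" r] by simp
  have p: "pasmN m n (Mmu_entry mu)"
    unfolding pasmN_def E_colsum[OF mu] E_rowsum[OF mu]
  proof (intro allI impI conjI)
    fix r c assume "r < m" "c < n"
    show "Mmu_entry mu r c \<in> {-1,0,1}" unfolding E_alt[OF mu] by auto
    show "(if c = mu r then 1 else 0::real) \<in> {0,1}" by auto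
    show "(if mu r \<le> c then 1 else 0) - (if r = 0 then 0 else if mu (r - 1) \<le> c then 1 else 0) \<in> {0,1::real}"
    proof (cases "r = 0")
      case False
      then have "mu r \<le> mu (r - 1)" using dec by simp
      then show ?thesis using False by auto
    qed simp
  qed
  have f: "fN m n lam nu (Mmu_entry mu) = 1"
    unfolding fN_def E_colsum[OF mu] E_rowtot[OF mu] using mun
    by (auto simp: badN_def intro!: sum.neutral dest: order.strict_trans2[OF _ lm(1)] order.strict_trans1[OF lm(2)])
  show ?thesis using p f by simp
qed




lemma S_step: "(\<Sum>r'\<le>r. A r' (c::nat)) = (if r = 0 then A 0 c else A r c + (\<Sum>r'\<le>r - 1. A r' c)) " for A :: "nat \<Rightarrow> nat \<Rightarrow> real"
  by (cases r) (simp_all add: atMost_Suc)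

lemma N1:
  assumes P: "pasmN m n A" and m: "0 < m" and n: "0 < n"
  shows "fN m n lam nu A \<le> 1"
proof -
  have rt: "(\<Sum>c<n. A r c) \<in> {0,1}" if "r < m" for r
  proof -
    have "{..<n} = {..n - 1}" using n by auto
    then show ?thesis using P that n unfolding pasmN_def by auto
  qed
  have S: "(\<Sum>r'\<le>r. A r' c) \<in> {0,1}" if "r < m" "c < n" for r c
    using P that unfolding pasmN_def by auto
  have "(\<Sum>c<n. A 0 c) \<le> 1" using rt[OF m] by auto
  moreover have "(\<Sum>r\<in>{1..<m}. \<Sum>c<n. A r c) \<ge> 0"
    by (rule sum_nonneg) (use rt in force)
  moreover have "(\<Sum>r<m. \<Sum>c<n. if badN lam nu r c then (\<Sum>r'\<le>r. A r' c) else 0) \<ge> 0"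
    by (intro sum_nonneg) (use S in force)
  ultimately show ?thesis unfolding fN_def by linarith
qed

lemma N2:
  assumes P: "pasmN m n A" and m: "0 < m" and n: "0 < n" and f: "fN m n lam nu A = 1"
    and lam: "is_partition lam" and nu: "is_partition nu" and ln: "psubseteq lam nu"
    and rect: "in_rect nu (n - 1) (m - 1)"
  shows "\<exists>mu. is_partition mu \<and> psubseteq lam mu \<and> psubseteq mu nu \<and>
     (\<forall>r<m. \<forall>c<n. A r c = Mmu_entry mu r c)"
proof -
  define S where "S r c = (\<Sum>r'\<le>r. A r' c)" for r c
  define rt where "rt r = (\<Sum>c<n. A r c)" for r
  have rt01: "rt r \<in> {0,1}" if "r < m" for r
  proof -
    have "{..<n} = {..n - 1}" using n by auto
    then show ?thesis using P that n unfolding pasmN_def rt_def by auto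
  qed
  have S01: "S r c \<in> {0,1}" if "r < m" "c < n" for r c
    using P that unfolding pasmN_def S_def by auto
  have t1: "(\<Sum>r\<in>{1..<m}. rt r) \<ge> 0"
    by (rule sum_nonneg) (use rt01 in force)
  have t2: "(\<Sum>r<m. \<Sum>c<n. if badN lam nu r c then S r c else 0) \<ge> 0"
    by (intro sum_nonneg) (use S01 in force)
  have fe: "rt 0 - (\<Sum>r\<in>{1..<m}. rt r) - (\<Sum>r<m. \<Sum>c<n. if badN lam nu r c then S r c else 0) = 1"
    using f unfolding fN_def S_def rt_def .
  have rt0: "rt 0 = 1" using rt01[OF m] t1 t2 fe by auto
  have rtnn: "\<forall>r\<in>{1..<m}. 0 \<le> rt r" using rt01 by fastforce
  have "(\<Sum>r\<in>{1..<m}. rt r) = 0" using rt01[OF m] t1 t2 fe by auto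
  then have "\<forall>r\<in>{1..<m}. rt r = 0" using sum_nonneg_eq_0_iff[of "{1..<m}" rt] rtnn by simp
  then have rtz: "rt r = 0" if "1 \<le> r" "r < m" for r using that by simp
  define g where "g r = (\<Sum>c<n. if badN lam nu r c then S r c else 0)" for r
  have gnn: "\<forall>c<n. 0 \<le> (if badN lam nu r c then S r c else 0)" if "r < m" for r
    using S01 that by fastforce
  have "\<forall>r\<in>{..<m}. 0 \<le> g r" unfolding g_def using gnn by (auto intro!: sum_nonneg)
  moreover have "(\<Sum>r<m. g r) = 0" unfolding g_def using rt01[OF m] t1 t2 fe by auto
  ultimately have "\<forall>r\<in>{..<m}. g r = 0" using sum_nonneg_eq_0_iff[of "{..<m}" g] by simp
  then have Z: "\<forall>c\<in>{..<n}. (if badN lam nu r c then S r c else 0) = 0" if "r < m" for r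
    using sum_nonneg_eq_0_iff[of "{..<n}" "\<lambda>c. if badN lam nu r c then S r c else 0"] gnn[OF that] that
    unfolding g_def by simp
  have Sbad: "S r c = 0" if "r < m" "c < n" "badN lam nu r c" for r c
  proof -
    have "(if badN lam nu r c then S r c else 0) = 0" using Z[OF that(1)] that(2) by blast
    then show ?thesis using that(3) by simp
  qed
  have Ssum: "(\<Sum>c<n. S r c) = 1" if "r < m" for r
    using that
  proof (induction r)
    case 0 then show ?case using rt0 by (simp add: S_def rt_def)
  next
    case (Suc r)
    have "(\<Sum>c<n. S (Suc r) c) = (\<Sum>c<n. S r c) + rt (Suc r)"
      by (simp add: S_def rt_def sum.distrib atMost_Suc)
    then show ?case using Suc rtz[of "Suc r"] by simp
  qed
  have ex1: "\<exists>!c. c < n \<and> S r c = 1" if "r < m" for r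
  proof -
    have ex: "\<exists>c. c < n \<and> S r c = 1"
    proof (rule ccontr)
      assume "\<not> ?thesis"
      then have "\<forall>c<n. S r c = 0" using S01[OF that] by blast
      then show False using Ssum[OF that] by simp
    qed
    moreover have "c1 = c2" if "c1 < n" "S r c1 = 1" "c2 < n" "S r c2 = 1" for c1 c2
    proof (rule ccontr)
      assume ne: "c1 \<noteq> c2"
      have "(\<Sum>c\<in>{c1,c2}. S r c) \<le> (\<Sum>c<n. S r c)"
        by (rule sum_mono2) (use \<open>r < m\<close> S01 that in force)+
      then show False using ne that Ssum[OF \<open>r < m\<close>] by simp
    qed
    ultimately show ?thesis by blast
  qed
  define p where "p r = (if r < m then (THE c. c < n \<and> S r c = 1) else 0)" for r
  have pp: "p r < n \<and> S r (p r) = 1" if "r < m" for r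
    using theI'[OF ex1[OF that]] that unfolding p_def by simp
  have Sp: "S r c = (if c = p r then 1 else 0)" if "r < m" "c < n" for r c
    using ex1[OF that(1)] pp[OF that(1)] S01[OF that] that by auto
  have AS: "A r c = S r c - (if r = 0 then 0 else S (r - 1) c)" for r c
    unfolding S_def by (cases r) (simp_all add: atMost_Suc)
  have nuz: "nu r = 0" if "m - 1 \<le> r" for r
    using rect_zero[OF nu _ that] rect unfolding in_rect_def by simp
  have pnu: "lam r \<le> p r \<and> p r \<le> nu r" if "r < m" for r
    using pp[OF that] Sbad[OF that, of "p r"] unfolding badN_def by fastforce
  have dec: "p r \<le> p (r - 1)" if "0 < r" "r < m" for r
  proof -
    have rs: "(\<Sum>c'\<le>c. A r c') \<in> {0,1}" if "c < n" for c
      using P \<open>r < m\<close> that unfolding pasmN_def by auto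
    have "(\<Sum>c'\<le>c. A r c') = (if p r \<le> c then 1 else 0) - (if p (r - 1) \<le> c then 1 else 0)"
      if "c < n" for c
    proof -
      have "(\<Sum>c'\<le>c. A r c') = (\<Sum>c'\<le>c. (if c' = p r then 1 else 0) - (if c' = p (r - 1) then 1 else 0))"
        using \<open>0 < r\<close> \<open>r < m\<close> that by (intro sum.cong) (auto simp: AS Sp)
      then show ?thesis by (simp add: sum_subtractf sum_ind_le)
    qed
    then show ?thesis using rs[of "p (r - 1)"] pp[of "r - 1"] that
      by (auto split: if_splits)
  qed
  have anti: "antimono p"
    unfolding antimono_iff_le_Suc
  proof
    fix r show "p (Suc r) \<le> p r"
      using dec[of "Suc r"] by (cases "Suc r < m") (auto simp: p_def)
  qed
  have part: "is_partition p"
    unfolding is_partition_def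
  proof
    show "\<forall>i j. i \<le> j \<longrightarrow> p j \<le> p i" using anti by (auto simp: antimono_def)
    show "finite {i. p i \<noteq> 0}" by (rule finite_subset[of _ "{..<m}"]) (auto simp: p_def)
  qed
  have l: "psubseteq lam p" unfolding psubseteq_def
  proof
    fix r show "lam r \<le> p r"
    proof (cases "r < m")
      case False then show ?thesis using nuz[of r] ln unfolding psubseteq_def
        by (metis diff_le_self le_trans not_le le_zero_eq order_less_imp_le)
    qed (use pnu in auto)
  qed
  have u: "psubseteq p nu" unfolding psubseteq_def
    using pnu by (auto simp: p_def)
  have "A r c = Mmu_entry p r c" if "r < m" "c < n" for r c
    unfolding E_alt[OF part] AS using that by (auto simp: Sp)
  then show ?thesis using part l u by blast
qed




lemma lin_comb: "linear f \<Longrightarrow> f ((1 - t) *\<^sub>R u + t *\<^sub>R v) = (1 - t) * f u + t * (f v :: real)"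
  by (simp add: linear_add linear_scale)

lemma face_linear:
  fixes f :: "'a::euclidean_space \<Rightarrow> real"
  assumes lf: "linear f" and le: "\<And>x. x \<in> S \<Longrightarrow> f x \<le> b" and cS: "convex S"
  shows "(S \<inter> {x. f x = b}) face_of S"
proof -
  have cH: "convex {x. f x = b}"
  proof (rule convexI)
    fix x y u v assume "x \<in> {x. f x = b}" "y \<in> {x. f x = b}" "(0::real) \<le> u" "0 \<le> v" "u + v = 1"
    then show "u *\<^sub>R x + v *\<^sub>R y \<in> {x. f x = b}"
      by (simp add: linear_add[OF lf] linear_scale[OF lf]) (metis distrib_right mult_1)
  qed
  have *: "f u = f x" if "x \<in> open_segment u v" "u \<in> S" "v \<in> S" and b: "b = f x" for u v x
  proof (rule antisym)
    show "f u \<le> f x" using le \<open>u \<in> S\<close> \<open>b = f x\<close> by blast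
  next
    obtain \<xi> where "b = f ((1 - \<xi>) *\<^sub>R u + \<xi> *\<^sub>R v)" "0 < \<xi>" "\<xi> < 1"
      using \<open>b = f x\<close> \<open>x \<in> open_segment u v\<close> in_segment
      by (auto simp: open_segment_image_interval split: if_split_asm)
    then have "b = (1 - \<xi>) * f u + \<xi> * f v" by (simp add: lin_comb[OF lf])
    then have "b + \<xi> * (f u) \<le> f u + \<xi> * b"
      using le [OF \<open>v \<in> S\<close>] \<open>0 < \<xi>\<close> mult_left_mono[of "f v" b \<xi>] by (simp add: algebra_simps)
    then have "(1 - \<xi>) * b \<le> (1 - \<xi>) * (f u)"
      by (simp add: algebra_simps)
    then have "b \<le> f u"
      using \<open>\<xi> < 1\<close> by auto
    with b show "f x \<le> f u" by simp
  qed
  show ?thesis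
    unfolding face_of_def
  proof (intro conjI ballI impI)
    show "S \<inter> {x. f x = b} \<subseteq> S" by blast
    show "convex (S \<inter> {x. f x = b})" by (rule convex_Int[OF cS cH])
    fix a c x assume ac: "a \<in> S" "c \<in> S" and x: "x \<in> S \<inter> {x. f x = b}" and xs: "x \<in> open_segment a c"
    have "f a = f x" using *[OF xs ac] x by simp
    moreover have "f c = f x" using *[of x c a] xs ac x open_segment_commute by auto
    ultimately show "a \<in> S \<inter> {x. f x = b}" "c \<in> S \<inter> {x. f x = b}" using ac x by simp_all
  qed
qed

lemma hull_exposed:
  fixes f :: "'a::real_vector \<Rightarrow> real"
  assumes lf: "linear f" and le: "\<And>x. x \<in> P \<Longrightarrow> f x \<le> b"
    and x: "x \<in> convex hull P" and fx: "f x = b"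
  shows "x \<in> convex hull (P \<inter> {y. f y = b})"
proof -
  obtain s u where s: "finite s" "s \<subseteq> P" and u: "\<forall>x\<in>s. 0 \<le> u x" "sum u s = 1"
    and xs: "(\<Sum>v\<in>s. u v *\<^sub>R v) = x"
    using x unfolding convex_hull_explicit by blast
  have "f x = (\<Sum>v\<in>s. u v * f v)" using xs[symmetric] by (simp add: linear_sum[OF lf] linear_scale[OF lf])
  then have "(\<Sum>v\<in>s. u v * (b - f v)) = 0"
    using fx u(2) by (simp add: algebra_simps sum_subtractf sum_distrib_right[symmetric])
  moreover have "\<forall>v\<in>s. 0 \<le> u v * (b - f v)" using u(1) le s(2) by auto
  ultimately have z: "\<forall>v\<in>s. u v * (b - f v) = 0" using sum_nonneg_eq_0_iff[OF s(1), of "\<lambda>v. u v * (b - f v)"] by simp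
  let ?s = "s \<inter> {y. f y = b}"
  have uz: "u v = 0" if "v \<in> s - ?s" for v using z that by auto
  have "sum u ?s = 1" using u(2) sum.mono_neutral_right[OF s(1), of ?s u] uz by auto
  moreover have "(\<Sum>v\<in>?s. u v *\<^sub>R v) = x"
    using xs sum.mono_neutral_right[OF s(1), of ?s "\<lambda>v. u v *\<^sub>R v"] uz by auto
  ultimately show ?thesis unfolding convex_hull_explicit
    using s u(1) by (intro CollectI exI[of _ ?s] exI[of _ u]) auto
qed




lemma card_pos': "0 < CARD('a::finite)" by simp

lemma pasm_iff:
  fixes M :: "real^'n::{finite,linorder}^'m::{finite,linorder}"
  assumes MA: "\<And>i j. M$i$j = A (rk i) (rk j)"
  shows "is_pasm M \<longleftrightarrow> pasmN CARD('m) CARD('n) A"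
proof -
  have c: "(\<Sum>i'\<in>{..i}. M$i'$j) = (\<Sum>r'\<le>rk i. A r' (rk j))" for i j
    unfolding MA using sum_rk_atMost[of "\<lambda>r. A r (rk j)" i] .
  have r: "(\<Sum>j'\<in>{..j}. M$i$j') = (\<Sum>c'\<le>rk j. A (rk i) c')" for i j
    unfolding MA using sum_rk_atMost[of "\<lambda>c. A (rk i) c" j] .
  have "is_pasm M \<longleftrightarrow> (\<forall>i::'m. \<forall>j::'n. A (rk i) (rk j) \<in> {-1,0,1} \<and> (\<Sum>r'\<le>rk i. A r' (rk j)) \<in> {0,1}
      \<and> (\<Sum>c'\<le>rk j. A (rk i) c') \<in> {0,1})"
    unfolding is_pasm_def c r unfolding MA by blast
  also have "\<dots> \<longleftrightarrow> (\<forall>r<CARD('m). \<forall>j::'n. A r (rk j) \<in> {-1,0,1} \<and> (\<Sum>r'\<le>r. A r' (rk j)) \<in> {0,1}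
      \<and> (\<Sum>c'\<le>rk j. A r c') \<in> {0,1})"
    by (rule all_rk)
  also have "\<dots> \<longleftrightarrow> pasmN CARD('m) CARD('n) A"
  proof -
    have k: "\<And>r. (\<forall>j::'n. (\<lambda>c. A r c \<in> {-1,0,1} \<and> (\<Sum>r'\<le>r. A r' c) \<in> {0,1} \<and> (\<Sum>c'\<le>c. A r c') \<in> {0,1}) (rk j))
       \<longleftrightarrow> (\<forall>c<CARD('n). (\<lambda>c. A r c \<in> {-1,0,1} \<and> (\<Sum>r'\<le>r. A r' c) \<in> {0,1} \<and> (\<Sum>c'\<le>c. A r c') \<in> {0,1}) c)"
      by (rule all_rk)
    show ?thesis unfolding pasmN_def using k by simp
  qed
  finally show ?thesis .
qed

lemma fN_cong:
  assumes "\<And>r c. r < m \<Longrightarrow> c < n \<Longrightarrow> A r c = B r c" and "0 < m"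
  shows "fN m n lam nu A = fN m n lam nu B"
proof -
  have m: "0 < m \<Longrightarrow> A 0 c = B 0 c" if "c < n" for c using assms that by simp
  show ?thesis unfolding fN_def
    using assms m
    by (auto intro!: sum.cong arg_cong2[where f="(-)"])
qed

lemma fN_lin:
  "fN m n lam nu (\<lambda>r c. x * A r c + y * B r c) = x * fN m n lam nu A + y * fN m n lam nu B"
proof -
  have e1: "\<And>r c. (if badN lam nu r c then (\<Sum>r'\<le>r. x * A r' c + y * B r' c) else 0) =
     x * (if badN lam nu r c then (\<Sum>r'\<le>r. A r' c) else 0) + y * (if badN lam nu r c then (\<Sum>r'\<le>r. B r' c) else 0)"
    by (simp add: sum.distrib sum_distrib_left)
  show ?thesis unfolding fN_def e1
    by (simp add: sum.distrib sum_distrib_left algebra_simps)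
qed




definition fM :: "(nat \<Rightarrow> nat) \<Rightarrow> (nat \<Rightarrow> nat) \<Rightarrow> real^'n::{finite,linorder}^'m::{finite,linorder} \<Rightarrow> real" where
  "fM lam nu M = fN CARD('m) CARD('n) lam nu (\<lambda>r c. M $ ix r $ ix c)"

lemma fM_linear: "linear (fM lam nu)"
proof (rule linearI)
  fix x y :: "real^'n::{finite,linorder}^'m::{finite,linorder}" and t :: real
  show "fM lam nu (x + y) = fM lam nu x + fM lam nu y"
    using fN_lin[where x=1 and y=1 and A="\<lambda>r c. x $ ix r $ ix c" and B="\<lambda>r c. y $ ix r $ ix c"]
    by (simp add: fM_def)
  show "fM lam nu (t *\<^sub>R x) = t *\<^sub>R fM lam nu x"
    using fN_lin[where x=t and y=0 and A="\<lambda>r c. x $ ix r $ ix c" and B="\<lambda>r c. x $ ix r $ ix c"]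
    by (simp add: fM_def)
qed

lemma M_ix: "(M :: real^'n::{finite,linorder}^'m::{finite,linorder}) $ i $ j = (\<lambda>r c. M $ ix r $ ix c) (rk i) (rk j)"
  by simp

lemma Mmu_nth: "(Mmu mu :: real^'n::{finite,linorder}^'m::{finite,linorder}) $ i $ j = Mmu_entry mu (rk i) (rk j)"
  by (simp add: Mmu_def)

lemma fM_Mmu: "fM lam nu (Mmu mu :: real^'n::{finite,linorder}^'m::{finite,linorder}) = fN CARD('m) CARD('n) lam nu (Mmu_entry mu)"
  unfolding fM_def Mmu_nth by (rule fN_cong) simp_all

lemma fM_le:
  fixes M :: "real^'n::{finite,linorder}^'m::{finite,linorder}"
  assumes "is_pasm M" shows "fM lam nu M \<le> 1"
  unfolding fM_def using assms pasm_iff[OF M_ix, of M] by (intro N1) simp_all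

lemma Xeq:
  assumes lam: "is_partition lam" and nu: "is_partition nu" and ln: "psubseteq lam nu"
    and rect: "in_rect nu (CARD('n::{finite,linorder}) - 1) (CARD('m::{finite,linorder}) - 1)"
  shows "{Mmu mu | mu. is_partition mu \<and> psubseteq lam mu \<and> psubseteq mu nu}
     = {M :: real^'n::{finite,linorder}^'m::{finite,linorder}. is_pasm M} \<inter> {M. fM lam nu M = 1}"
proof (intro equalityI subsetI)
  fix M :: "real^'n::{finite,linorder}^'m::{finite,linorder}" assume "M \<in> {Mmu mu | mu. is_partition mu \<and> psubseteq lam mu \<and> psubseteq mu nu}"
  then obtain mu where M: "M = Mmu mu" and mu: "is_partition mu" "psubseteq lam mu" "psubseteq mu nu" by blast
  have "pasmN CARD('m) CARD('n) (Mmu_entry mu) \<and> fN CARD('m) CARD('n) lam nu (Mmu_entry mu) = 1"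
    by (rule N3[OF mu(1) nu mu(2,3) rect]) simp_all
  then show "M \<in> {M :: real^'n::{finite,linorder}^'m::{finite,linorder}. is_pasm M} \<inter> {M. fM lam nu M = 1}"
  proof -
    have "is_pasm (Mmu mu :: real^'n::{finite,linorder}^'m::{finite,linorder}) \<longleftrightarrow> pasmN CARD('m) CARD('n) (Mmu_entry mu)"
      by (rule pasm_iff) (rule Mmu_nth)
    moreover have "fM lam nu (Mmu mu :: real^'n::{finite,linorder}^'m::{finite,linorder}) = fN CARD('m) CARD('n) lam nu (Mmu_entry mu)"
      by (rule fM_Mmu)
    ultimately show ?thesis unfolding M using \<open>pasmN CARD('m) CARD('n) (Mmu_entry mu) \<and> _\<close> by simp
  qed
next
  fix M :: "real^'n::{finite,linorder}^'m::{finite,linorder}" assume "M \<in> {M :: real^'n::{finite,linorder}^'m::{finite,linorder}. is_pasm M} \<inter> {M. fM lam nu M = 1}"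
  then have P: "pasmN CARD('m) CARD('n) (\<lambda>r c. M $ ix r $ ix c)" and f: "fM lam nu M = 1"
    using pasm_iff[OF M_ix, of M] by auto
  obtain mu where mu: "is_partition mu" "psubseteq lam mu" "psubseteq mu nu"
    and E: "\<forall>r<CARD('m). \<forall>c<CARD('n). M $ ix r $ ix c = Mmu_entry mu r c"
    using N2[OF P _ _ f[unfolded fM_def] lam nu ln rect] by auto
  have "M = Mmu mu"
    unfolding vec_eq_iff Mmu_nth using E rk_lt_card by (metis ix_rk)
  then show "M \<in> {Mmu mu | mu. is_partition mu \<and> psubseteq lam mu \<and> psubseteq mu nu}"
    using mu by blast
qed

lemma face_part:
  assumes lam: "is_partition lam" and nu: "is_partition nu" and ln: "psubseteq lam nu"
    and rect: "in_rect nu (CARD('n::{finite,linorder}) - 1) (CARD('m::{finite,linorder}) - 1)"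
  shows "(PASM_skew lam nu :: (real^'n::{finite,linorder}^'m::{finite,linorder}) set) face_of PASM"
proof -
  let ?P = "{M :: real^'n::{finite,linorder}^'m::{finite,linorder}. is_pasm M}"
  let ?H = "{M :: real^'n::{finite,linorder}^'m::{finite,linorder}. fM lam nu M = 1}"
  have le: "\<And>x. x \<in> convex hull ?P \<Longrightarrow> fM lam nu x \<le> 1"
  proof -
    have "convex {x :: real^'n::{finite,linorder}^'m::{finite,linorder}. fM lam nu x \<le> 1}"
    proof (rule convexI)
      fix x y :: "real^'n::{finite,linorder}^'m::{finite,linorder}" and u v :: real
      assume "x \<in> {x. fM lam nu x \<le> 1}" "y \<in> {x. fM lam nu x \<le> 1}" "0 \<le> u" "0 \<le> v" "u + v = 1"
      then show "u *\<^sub>R x + v *\<^sub>R y \<in> {x. fM lam nu x \<le> 1}"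
        using mult_left_mono[of "fM lam nu x" 1 u] mult_left_mono[of "fM lam nu y" 1 v]
        by (simp add: linear_add[OF fM_linear] linear_scale[OF fM_linear])
    qed
    moreover have "?P \<subseteq> {x. fM lam nu x \<le> 1}" using fM_le by blast
    ultimately show "\<And>x. x \<in> convex hull ?P \<Longrightarrow> fM lam nu x \<le> 1"
      using hull_minimal[of ?P "{x. fM lam nu x \<le> 1}" convex] by blast
  qed
  have F: "(convex hull ?P \<inter> ?H) face_of convex hull ?P"
    by (rule face_linear[OF fM_linear le convex_convex_hull])
  have "convex hull (?P \<inter> ?H) = convex hull ?P \<inter> ?H"
  proof
    have cH: "convex ?H"
    proof (rule convexI)
      fix x y :: "real^'n::{finite,linorder}^'m::{finite,linorder}" and u v :: real
      assume "x \<in> ?H" "y \<in> ?H" "0 \<le> u" "0 \<le> v" "u + v = 1"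
      then show "u *\<^sub>R x + v *\<^sub>R y \<in> ?H"
        by (simp add: linear_add[OF fM_linear] linear_scale[OF fM_linear])
    qed
    show "convex hull (?P \<inter> ?H) \<subseteq> convex hull ?P \<inter> ?H"
      using hull_mono[of "?P \<inter> ?H" ?P] hull_minimal[of "?P \<inter> ?H" ?H convex] cH by blast
    show "convex hull ?P \<inter> ?H \<subseteq> convex hull (?P \<inter> ?H)"
      using hull_exposed[OF fM_linear, where P="?P" and b=1] fM_le by blast
  qed
  then show ?thesis
    unfolding PASM_skew_def PASM_def Xeq[OF assms] using F by simp
qed




definition Lmap :: "real^'n::{finite,linorder}^'m::{finite,linorder} \<Rightarrow> real^'n::{finite,linorder}^'m::{finite,linorder}" where
  "Lmap M = (\<chi> i j. \<Sum>i'\<in>{..i}. \<Sum>j'\<in>{..j}. M$i'$j')"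

lemma Lmap_linear: "linear Lmap"
  by (rule linearI) (simp_all add: Lmap_def vec_eq_iff sum.distrib scaleR_sum_right sum_distrib_left)

lemma prefix0:
  assumes "\<forall>k<(N::nat). (\<Sum>k'\<le>k. g k') = (0::real)" "k < N"
  shows "g k = 0"
proof (cases k)
  case 0 then show ?thesis using assms by auto
next
  case (Suc k')
  then have "k' < N" using assms(2) by simp
  then have "(\<Sum>k''\<le>k'. g k'') = 0" "(\<Sum>k''\<le>Suc k'. g k'') = 0" using assms Suc by blast+
  then show ?thesis using Suc by simp
qed

lemma Lmap_nat:
  fixes M :: "real^'n::{finite,linorder}^'m::{finite,linorder}"
  assumes MA: "\<And>i j. M$i$j = A (rk i) (rk j)"
  shows "Lmap M $ i $ j = (\<Sum>r'\<le>rk i. \<Sum>c'\<le>rk j. A r' c')"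
proof -
  have "Lmap M $ i $ j = (\<Sum>i'\<in>{..i}. \<Sum>j'\<in>{..j}. A (rk i') (rk j'))" by (simp add: Lmap_def MA)
  also have "\<dots> = (\<Sum>i'\<in>{..i}. \<Sum>c'\<le>rk j. A (rk i') c')"
    by (intro sum.cong refl) (rule sum_rk_atMost)
  also have "\<dots> = (\<Sum>r'\<le>rk i. \<Sum>c'\<le>rk j. A r' c')"
    by (rule sum_rk_atMost[of "\<lambda>r. \<Sum>c'\<le>rk j. A r c'"])
  finally show ?thesis .
qed

lemma Lmap_inj: "inj (Lmap :: real^'n::{finite,linorder}^'m::{finite,linorder} \<Rightarrow> _)"
  unfolding linear_injective_0[OF Lmap_linear]
proof (intro allI impI)
  fix M :: "real^'n::{finite,linorder}^'m::{finite,linorder}"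
  assume L0: "Lmap M = 0"
  define A where "A r c = M $ ix r $ ix c" for r c
  have MA: "M$i$j = A (rk i) (rk j)" for i j by (simp add: A_def)
  have z: "(\<Sum>r'\<le>r. \<Sum>c'\<le>c. A r' c') = 0" if "r < CARD('m)" "c < CARD('n)" for r c
    using Lmap_nat[OF MA, of "ix r" "ix c"] L0 that by simp
  have h: "(\<Sum>c'\<le>c. A r c') = 0" if "r < CARD('m)" "c < CARD('n)" for r c
    using prefix0[of "CARD('m)" "\<lambda>r. \<Sum>c'\<le>c. A r c'" r] z that by blast
  have A0: "A r c = 0" if "r < CARD('m)" "c < CARD('n)" for r c
    using prefix0[of "CARD('n)" "\<lambda>c. A r c" c] h that by blast
  show "M = 0" unfolding vec_eq_iff by (simp add: MA A0 rk_lt_card)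
qed

definition Cmu :: "(nat \<Rightarrow> nat) \<Rightarrow> real^'n::{finite,linorder}^'m::{finite,linorder}" where
  "Cmu mu = (\<chi> i j. if mu (rk i) \<le> rk j then 1 else 0)"

lemma E_corner:
  assumes "is_partition mu"
  shows "(\<Sum>r'\<le>r. \<Sum>c'\<le>c. Mmu_entry mu r' c') = (if mu r \<le> c then 1 else 0)"
  by (induction r) (simp_all add: E_rowsum[OF assms])

lemma Lmap_Mmu:
  assumes "is_partition mu"
  shows "Lmap (Mmu mu :: real^'n::{finite,linorder}^'m::{finite,linorder}) = Cmu mu"
  unfolding vec_eq_iff
proof (intro allI)
  fix i :: 'm and j :: 'n
  have "Lmap (Mmu mu :: real^'n::{finite,linorder}^'m::{finite,linorder}) $ i $ j = (\<Sum>r'\<le>rk i. \<Sum>c'\<le>rk j. Mmu_entry mu r' c')"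
    by (rule Lmap_nat) (rule Mmu_nth)
  then show "Lmap (Mmu mu :: real^'n::{finite,linorder}^'m::{finite,linorder}) $ i $ j = Cmu mu $ i $ j"
    unfolding Cmu_def E_corner[OF assms] by simp
qed




lemma axis2_nth: "(axis i (axis j (1::real)) :: real^'n::finite^'m::finite) $ i0 $ j0 = (if (i0, j0) = (i, j) then 1 else 0)"
  by (simp add: axis_def)

lemma card_rk_interval:
  assumes "b \<le> CARD('a::{finite,linorder})"
  shows "card {j::'a. a \<le> rk j \<and> rk j < b} = b - a"
proof -
  have "rk ` {j::'a. a \<le> rk j \<and> rk j < b} = {a..<b}"
  proof
    show "rk ` {j::'a. a \<le> rk j \<and> rk j < b} \<subseteq> {a..<b}" by auto
    show "{a..<b} \<subseteq> rk ` {j::'a. a \<le> rk j \<and> rk j < b}"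
    proof
      fix c assume c: "c \<in> {a..<b}"
      then obtain j :: 'a where "rk j = c" using rk_surj assms by (metis atLeastLessThan_iff order_less_le_trans)
      then show "c \<in> rk ` {j::'a. a \<le> rk j \<and> rk j < b}" using c by auto
    qed
  qed
  moreover have "inj_on rk {j::'a. a \<le> rk j \<and> rk j < b}" using rk_inj inj_on_subset by blast
  ultimately show ?thesis using card_image by fastforce
qed

lemma psize_eq:
  assumes "\<And>r. m \<le> r \<Longrightarrow> mu r = 0"
  shows "psize mu = (\<Sum>r<m. mu r)"
proof -
  have "{i. mu i \<noteq> 0} \<subseteq> {..<m}"
  proof
    fix x assume "x \<in> {i. mu i \<noteq> 0}"
    then show "x \<in> {..<m}" using assms[of x] by (cases "m \<le> x") auto
  qed
  then show ?thesis unfolding psize_def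
    by (intro sum.mono_neutral_right[symmetric]) auto
qed

lemma dim_part:
  assumes lam: "is_partition lam" and nu: "is_partition nu" and ln: "psubseteq lam nu"
    and rect: "in_rect nu (CARD('n::{finite,linorder}) - 1) (CARD('m::{finite,linorder}) - 1)"
  shows "aff_dim (PASM_skew lam nu :: (real^'n::{finite,linorder}^'m::{finite,linorder}) set) = int (psize nu) - int (psize lam)"
proof -
  define Parts where "Parts = {mu. is_partition mu \<and> psubseteq lam mu \<and> psubseteq mu nu}"
  define Y where "Y = (\<lambda>mu. (Cmu mu :: real^'n::{finite,linorder}^'m::{finite,linorder}) - Cmu lam) ` Parts"
  define Cells where "Cells = {(i::'m, j::'n). lam (rk i) \<le> rk j \<and> rk j < nu (rk i)}"
  define B where "B = (\<lambda>p. (axis (fst p) (axis (snd p) 1) :: real^'n::{finite,linorder}^'m::{finite,linorder})) ` Cells"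
  have lamP: "lam \<in> Parts" using lam ln unfolding Parts_def psubseteq_def by auto
  have lnr: "lam r \<le> nu r" for r using ln unfolding psubseteq_def by auto
  have nun: "nu r \<le> CARD('n) - 1" for r
    using part_mono[OF nu, of 0 r] rect unfolding in_rect_def by simp
  have nuz: "nu r = 0" if "CARD('m) - 1 \<le> r" for r
    using rect_zero[OF nu _ that] rect unfolding in_rect_def by simp
  have "aff_dim (PASM_skew lam nu :: (real^'n::{finite,linorder}^'m::{finite,linorder}) set)
      = aff_dim ((Mmu :: _ \<Rightarrow> real^'n::{finite,linorder}^'m::{finite,linorder}) ` Parts)"
    unfolding PASM_skew_def aff_dim_convex_hull Parts_def by (simp add: setcompr_eq_image)
  also have "\<dots> = aff_dim (Lmap ` (Mmu :: _ \<Rightarrow> real^'n::{finite,linorder}^'m::{finite,linorder}) ` Parts)"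
    by (rule aff_dim_injective_linear_image[OF Lmap_linear Lmap_inj, symmetric])
  also have "Lmap ` (Mmu :: _ \<Rightarrow> real^'n::{finite,linorder}^'m::{finite,linorder}) ` Parts = Cmu ` Parts"
    unfolding image_image by (intro image_cong refl) (simp add: Lmap_Mmu Parts_def)
  also have "aff_dim ((Cmu :: _ \<Rightarrow> real^'n::{finite,linorder}^'m::{finite,linorder}) ` Parts) = int (dim Y)"
  proof -
    have "Cmu lam \<in> affine hull ((Cmu :: _ \<Rightarrow> real^'n::{finite,linorder}^'m::{finite,linorder}) ` Parts)"
      using lamP by (intro hull_inc) auto
    from aff_dim_eq_dim[OF this] show ?thesis
      unfolding Y_def image_image by simp
  qed
  also have "dim Y = card Cells"
  proof -
    have YB: "Y \<subseteq> span B"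
    proof
      fix y assume "y \<in> Y"
      then obtain mu where mu: "mu \<in> Parts" and y: "y = Cmu mu - Cmu lam" unfolding Y_def by blast
      have lm: "lam r \<le> mu r" "mu r \<le> nu r" for r using mu unfolding Parts_def psubseteq_def by auto
      have yz: "y $ i $ j = 0" if "(i, j) \<notin> Cells" for i j
        using that lm[of "rk i"] unfolding y Cells_def Cmu_def by auto
      have "y = (\<Sum>p\<in>Cells. (y $ fst p $ snd p) *\<^sub>R axis (fst p) (axis (snd p) 1))"
        unfolding vec_eq_iff
      proof (intro allI)
        fix i j
        have "(\<Sum>p\<in>Cells. (y $ fst p $ snd p) *\<^sub>R (axis (fst p) (axis (snd p) 1) :: real^'n::{finite,linorder}^'m::{finite,linorder})) $ i $ j
          = (\<Sum>p\<in>Cells. (if p = (i, j) then y $ i $ j else 0))"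
          unfolding sum_component vector_scaleR_component by (intro sum.cong refl) (auto simp: axis2_nth)
        also have "\<dots> = y $ i $ j" using yz[of i j] by (simp add: sum.delta' Cells_def)
        finally show "y $ i $ j = (\<Sum>p\<in>Cells. (y $ fst p $ snd p) *\<^sub>R (axis (fst p) (axis (snd p) 1) :: real^'n::{finite,linorder}^'m::{finite,linorder})) $ i $ j"
          by simp
      qed
      also have "\<dots> \<in> span B"
        by (intro span_sum span_scale span_base) (auto simp: B_def)
      finally show "y \<in> span B" .
    qed
    have BY: "B \<subseteq> span Y"
    proof
      fix v assume "v \<in> B"
      then obtain i j where ij: "(i, j) \<in> Cells" and v: "v = axis i (axis j 1)" unfolding B_def by auto
      define a where "a = rk i"
      define b where "b = rk j"
      have ab: "lam a \<le> b" "b < nu a" using ij unfolding Cells_def a_def b_def by auto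
      define mu1 where "mu1 k = (if k < a then max (lam k) (b + 1) else if k = a then b else lam k)" for k
      define mu2 where "mu2 k = (if k \<le> a then max (lam k) (b + 1) else lam k)" for k
      have lmono: "lam k \<le> lam k'" if "k' \<le> k" for k k' using part_mono[OF lam that] .
      have nmono: "nu k \<le> nu k'" if "k' \<le> k" for k k' using part_mono[OF nu that] .
      have sb: "Suc b \<le> nu k" if "k \<le> a" for k using ab(2) part_mono[OF nu that] by simp
      have fin: "finite {i. lam i \<noteq> 0}" using lam unfolding is_partition_def by simp
      have P1: "mu1 \<in> Parts"
        unfolding Parts_def is_partition_def psubseteq_def
      proof (intro CollectI conjI allI impI)
        fix k k' :: nat assume "k \<le> k'"
        then show "mu1 k' \<le> mu1 k" using lmono[of k k'] lmono[of a k'] ab unfolding mu1_def by auto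
      next
        show "finite {i. mu1 i \<noteq> 0}"
          by (rule finite_subset[of _ "{..a} \<union> {i. lam i \<noteq> 0}"]) (use fin in \<open>auto simp: mu1_def\<close>)
      next
        fix k show "lam k \<le> mu1 k" using ab unfolding mu1_def by auto
      next
        fix k show "mu1 k \<le> nu k" using ab lnr[of k] sb[of k] unfolding mu1_def by (cases "k \<le> a") auto
      qed
      have P2: "mu2 \<in> Parts"
        unfolding Parts_def is_partition_def psubseteq_def
      proof (intro CollectI conjI allI impI)
        fix k k' :: nat assume "k \<le> k'"
        then show "mu2 k' \<le> mu2 k" using lmono[of k k'] lmono[of a k'] ab unfolding mu2_def by auto
      next
        show "finite {i. mu2 i \<noteq> 0}"
          by (rule finite_subset[of _ "{..a} \<union> {i. lam i \<noteq> 0}"]) (use fin in \<open>auto simp: mu2_def\<close>)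
      next
        fix k show "lam k \<le> mu2 k" unfolding mu2_def by auto
      next
        fix k show "mu2 k \<le> nu k" using ab lnr[of k] sb[of k] unfolding mu2_def by (cases "k \<le> a") auto
      qed
      have "v = (Cmu mu1 - Cmu lam) - (Cmu mu2 - Cmu lam)"
        unfolding vec_eq_iff v
      proof (intro allI)
        fix i0 j0
        show "axis i (axis j 1) $ i0 $ j0 = ((Cmu mu1 - Cmu lam) - (Cmu mu2 - Cmu lam) :: real^'n::{finite,linorder}^'m::{finite,linorder}) $ i0 $ j0"
        proof (cases "i0 = i")
          case True
          then show ?thesis using ab unfolding axis2_nth Cmu_def mu1_def mu2_def a_def b_def
            by (auto simp: rk_eq_iff[symmetric])
        next
          case False
          then have "rk i0 \<noteq> a" unfolding a_def by (simp add: rk_eq_iff)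
          then show ?thesis using False unfolding axis2_nth Cmu_def mu1_def mu2_def by auto
        qed
      qed
      also have "\<dots> \<in> span Y"
        using P1 P2 by (intro span_diff span_base) (auto simp: Y_def)
      finally show "v \<in> span Y" .
    qed
    have "span Y = span B" using YB BY by (simp add: span_eq)
    then have "dim Y = dim B" by (metis dim_span)
    also have "independent B"
    proof (rule independent_mono[OF independent_Basis])
      show "B \<subseteq> Basis" unfolding B_def by auto
    qed
    then have "dim B = card B" by (rule dim_eq_card_independent)
    also have "card B = card Cells"
      unfolding B_def by (rule card_image) (auto simp: inj_on_def axis_eq_axis)
    finally show ?thesis .
  qed
  also have "int (card Cells) = int (psize nu) - int (psize lam)"
  proof -
    have "Cells = Sigma UNIV (\<lambda>i. {j. lam (rk i) \<le> rk j \<and> rk j < nu (rk i)})"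
      unfolding Cells_def by auto
    then have "card Cells = (\<Sum>i\<in>(UNIV::'m set). card {j::'n. lam (rk i) \<le> rk j \<and> rk j < nu (rk i)})"
      by (simp add: card_SigmaI)
    also have "\<dots> = (\<Sum>i\<in>(UNIV::'m set). nu (rk i) - lam (rk i))"
      using nun by (intro sum.cong refl card_rk_interval) (metis Suc_pred' card_pos' le_imp_less_Suc less_imp_le)
    also have "\<dots> = (\<Sum>r<CARD('m). nu r - lam r)" by (rule sum_rk_UNIV)
    finally have "int (card Cells) = (\<Sum>r<CARD('m). int (nu r) - int (lam r))"
      using lnr by (simp add: of_nat_diff)
    also have "\<dots> = int (\<Sum>r<CARD('m). nu r) - int (\<Sum>r<CARD('m). lam r)"
      by (simp add: sum_subtractf)
    moreover have "psize nu = (\<Sum>r<CARD('m). nu r)"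
      by (rule psize_eq) (simp add: nuz)
    moreover have "psize lam = (\<Sum>r<CARD('m). lam r)"
      by (rule psize_eq) (metis le_zero_eq lnr nuz diff_le_self le_trans)
    ultimately show ?thesis by simp
  qed
  finally show ?thesis .
qed


theorem theorem2:
  fixes lam nu :: "nat \<Rightarrow> nat"
  assumes "is_partition lam" and "is_partition nu"
    and "psubseteq lam nu"
    and "in_rect nu (CARD('n::{finite,linorder}) - 1) (CARD('m::{finite,linorder}) - 1)"
  shows "(PASM_skew lam nu :: (real^'n::{finite,linorder}^'m::{finite,linorder}) set) face_of PASM \<and>
      aff_dim (PASM_skew lam nu :: (real^'n::{finite,linorder}^'m::{finite,linorder}) set) = int (psize nu) - int (psize lam)"
  using face_part[OF assms] dim_part[OF assms] by simp

end
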